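(* Let $\Phi$ be a countable measure-determining class of measurable functions $\phi:\mathbb{R}\to\mathbb{R}$ with $\|\phi\|_\infty\le1$, and let $$\Phi_1=\Big\{\tfrac{f+cg}{\|f+cg\|_\infty}:\ f,g\in\Phi,\ c\in\mathbb{Q},\ f+cg\not\equiv0\Big\}.$$ Let $\alpha,\mu,\nu$ be Borel probability measures on $\mathbb{R}$ with $\mu\neq\alpha$, $\nu\neq\alpha$ and $\mu\neq\nu$. For a bounded measurable $\psi$ write $\psi_0=\psi-\int\psi\,d\alpha$. Then there exists $\psi\in\Phi_1$ with $$\int\psi_0\,d\mu\neq0,\qquad \int\psi_0\,d\nu\neq0,\qquad \int\psi_0\,d\mu\neq\int\psi_0\,d\nu.$$
   Context: A class $\Phi$ of measurable functions on $\mathbb{R}$ is measure determining if, for Borel probability measures $\mu,\nu$, $\int\phi\,d\mu=\int\phi\,d\nu$ for all $\phi\in\Phi$ implies $\mu=\nu$. *)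

theory Defs
  imports "HOL-Probability.Probability"
begin

definition borel_prob :: "real measure \<Rightarrow> bool" where
  "borel_prob M \<longleftrightarrow> prob_space M \<and> sets M = sets borel"

definition measure_determining :: "(real \<Rightarrow> real) set \<Rightarrow> bool" where
  "measure_determining \<Phi> \<longleftrightarrow>
     (\<forall>\<mu> \<nu>. borel_prob \<mu> \<longrightarrow> borel_prob \<nu> \<longrightarrow>
        (\<forall>\<phi>\<in>\<Phi>. integral\<^sup>L \<mu> \<phi> = integral\<^sup>L \<nu> \<phi>) \<longrightarrow> \<mu> = \<nu>)"

definition supnorm :: "(real \<Rightarrow> real) \<Rightarrow> real" where
  "supnorm h = (SUP x. \<bar>h x\<bar>)"

definition Phi1 :: "(real \<Rightarrow> real) set \<Rightarrow> (real \<Rightarrow> real) set" where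
  "Phi1 \<Phi> = {(\<lambda>x. (f x + c * g x) / supnorm (\<lambda>y. f y + c * g y)) | f g c.
      f \<in> \<Phi> \<and> g \<in> \<Phi> \<and> c \<in> \<rat> \<and> (\<lambda>y. f y + c * g y) \<noteq> (\<lambda>y. 0)}"

end

theory Submission
  imports Defs
begin

lemma bp_integrable:
  assumes "borel_prob M" "h \<in> borel_measurable borel" "\<And>x. \<bar>h x\<bar> \<le> (B::real)"
  shows "integrable M h"
proof -
  interpret prob_space M using assms(1) by (simp add: borel_prob_def)
  have "h \<in> borel_measurable M"
    using assms(1,2) measurable_cong_sets[of M borel] by (auto simp: borel_prob_def)
  then show ?thesis
    by (intro integrable_const_bound[where B=B]) (use assms(3) in auto)
qed

lemma bp_centered:
  fixes h :: "real \<Rightarrow> real" and k :: real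
  assumes "borel_prob M" "integrable M h"
  shows "(\<integral>x. (h x - k) \<partial>M) = integral\<^sup>L M h - k"
proof -
  interpret prob_space M using assms(1) by (simp add: borel_prob_def)
  show ?thesis using assms(2) by (simp add: prob_space lebesgue_integral_const)
qed

lemma choose_nat:
  fixes x1 y1 x2 y2 x3 y3 :: real
  assumes "x1 \<noteq> 0 \<or> y1 \<noteq> 0" "x2 \<noteq> 0 \<or> y2 \<noteq> 0" "x3 \<noteq> 0 \<or> y3 \<noteq> 0"
  shows "\<exists>n::nat. x1 + real n * y1 \<noteq> 0 \<and> x2 + real n * y2 \<noteq> 0 \<and> x3 + real n * y3 \<noteq> 0"
proof -
  have fin: "finite {n::nat. x + real n * y = 0}" if "x \<noteq> 0 \<or> y \<noteq> 0" for x y :: real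
  proof (cases "y = 0")
    case True then show ?thesis using that by simp
  next
    case False
    have "{n::nat. x + real n * y = 0} \<subseteq> {nat \<lceil>- x / y\<rceil>}"
    proof
      fix n assume "n \<in> {n::nat. x + real n * y = 0}"
      then have "real n = - x / y" using False by (simp add: field_simps)
      then show "n \<in> {nat \<lceil>- x / y\<rceil>}" by (metis ceiling_of_nat nat_int singletonI)
    qed
    then show ?thesis using finite_subset by blast
  qed
  have "finite ({n::nat. x1 + real n * y1 = 0} \<union> {n. x2 + real n * y2 = 0} \<union> {n. x3 + real n * y3 = 0})"
    using fin[OF assms(1)] fin[OF assms(2)] fin[OF assms(3)] by (simp only: finite_Un)
  then obtain n where "n \<notin> {n::nat. x1 + real n * y1 = 0} \<union> {n. x2 + real n * y2 = 0} \<union> {n. x3 + real n * y3 = 0}"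
    using ex_new_if_finite[OF infinite_UNIV_nat] by (metis UNIV_I)
  then show ?thesis by blast
qed

theorem lemma3p5:
  fixes \<Phi> :: "(real \<Rightarrow> real) set" and \<alpha> \<mu> \<nu> :: "real measure"
  assumes "countable \<Phi>"
    and "measure_determining \<Phi>"
    and "\<forall>\<phi>\<in>\<Phi>. \<phi> \<in> borel_measurable borel \<and> (\<forall>x. \<bar>\<phi> x\<bar> \<le> 1)"
    and "borel_prob \<alpha>" and "borel_prob \<mu>" and "borel_prob \<nu>"
    and "\<mu> \<noteq> \<alpha>" and "\<nu> \<noteq> \<alpha>" and "\<mu> \<noteq> \<nu>"
  shows "\<exists>\<psi>\<in>Phi1 \<Phi>.
     (\<integral>x. (\<psi> x - integral\<^sup>L \<alpha> \<psi>) \<partial>\<mu>) \<noteq> 0 \<and>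
     (\<integral>x. (\<psi> x - integral\<^sup>L \<alpha> \<psi>) \<partial>\<nu>) \<noteq> 0 \<and>
     (\<integral>x. (\<psi> x - integral\<^sup>L \<alpha> \<psi>) \<partial>\<mu>) \<noteq> (\<integral>x. (\<psi> x - integral\<^sup>L \<alpha> \<psi>) \<partial>\<nu>)"
proof -
  define A where "A h = integral\<^sup>L \<mu> h - integral\<^sup>L \<alpha> h" for h :: "real \<Rightarrow> real"
  define B where "B h = integral\<^sup>L \<nu> h - integral\<^sup>L \<alpha> h" for h :: "real \<Rightarrow> real"
  define D where "D h = integral\<^sup>L \<mu> h - integral\<^sup>L \<nu> h" for h :: "real \<Rightarrow> real"
  have md: "\<exists>\<phi>\<in>\<Phi>. integral\<^sup>L M \<phi> \<noteq> integral\<^sup>L N \<phi>"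
    if "borel_prob M" "borel_prob N" "M \<noteq> N" for M N
    using assms(2) that unfolding measure_determining_def by blast
  obtain f1 where f1: "f1 \<in> \<Phi>" "A f1 \<noteq> 0" using md[OF assms(5,4,7)] A_def by auto
  obtain f2 where f2: "f2 \<in> \<Phi>" "B f2 \<noteq> 0" using md[OF assms(6,4,8)] B_def by auto
  obtain f3 where f3: "f3 \<in> \<Phi>" "D f3 \<noteq> 0" using md[OF assms(5,6,9)] D_def by auto
  have DAB: "D h = A h - B h" for h unfolding A_def B_def D_def by simp
  obtain g where g: "g \<in> \<Phi>" "A f1 \<noteq> 0 \<or> A g \<noteq> 0" "B f1 \<noteq> 0 \<or> B g \<noteq> 0" "D f1 \<noteq> 0 \<or> D g \<noteq> 0"
  proof (cases "B f1 = 0")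
    case True
    then show ?thesis using that[of f2] f1 f2 DAB by auto
  next
    case False
    then show ?thesis using that[of f3] f1 f3 by auto
  qed
  obtain n :: nat where n: "A f1 + real n * A g \<noteq> 0" "B f1 + real n * B g \<noteq> 0"
    "D f1 + real n * D g \<noteq> 0"
    using choose_nat[OF g(2,3,4)] by blast
  define c where "c = real n"
  define h where "h = (\<lambda>y. f1 y + c * g y)"
  define s where "s = supnorm h"
  define \<psi> where "\<psi> = (\<lambda>x. h x / s)"
  have mf1: "f1 \<in> borel_measurable borel" "\<And>x. \<bar>f1 x\<bar> \<le> 1" using assms(3) f1(1) by auto
  have mg: "g \<in> borel_measurable borel" "\<And>x. \<bar>g x\<bar> \<le> 1" using assms(3) g(1) by auto
  have hb: "\<bar>h x\<bar> \<le> 1 + c" for x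
  proof -
    have "\<bar>c * g x\<bar> \<le> c" using mg(2)[of x] unfolding c_def
      by (simp add: abs_mult mult_left_le)
    then show ?thesis unfolding h_def using mf1(2)[of x] by linarith
  qed
  have hm: "h \<in> borel_measurable borel" unfolding h_def using mf1(1) mg(1) by measurable
  have lin: "integral\<^sup>L M h = integral\<^sup>L M f1 + c * integral\<^sup>L M g" if "borel_prob M" for M
  proof -
    have "integrable M f1" "integrable M g" using bp_integrable[OF that] mf1 mg by blast+
    then show ?thesis unfolding h_def by simp
  qed
  have Ah: "A h = A f1 + c * A g" unfolding A_def using lin[OF assms(5)] lin[OF assms(4)]
    by (simp add: algebra_simps)
  have Bh: "B h = B f1 + c * B g" unfolding B_def using lin[OF assms(6)] lin[OF assms(4)]
    by (simp add: algebra_simps)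
  have Dh: "D h = D f1 + c * D g" unfolding D_def using lin[OF assms(5)] lin[OF assms(6)]
    by (simp add: algebra_simps)
  have hnz: "h \<noteq> (\<lambda>y. 0)"
  proof
    assume "h = (\<lambda>y. 0)"
    then have "A h = 0" unfolding A_def by simp
    then show False using n(1) Ah c_def by simp
  qed
  then obtain x0 where x0: "h x0 \<noteq> 0" by auto
  have "bdd_above (range (\<lambda>x. \<bar>h x\<bar>))" using hb by (intro bdd_aboveI2) auto
  then have "\<bar>h x0\<bar> \<le> s" unfolding s_def supnorm_def by (rule cSUP_upper[OF UNIV_I])
  then have spos: "s \<noteq> 0" using x0 by auto
  have intpsi: "integral\<^sup>L M \<psi> = integral\<^sup>L M h / s" for M unfolding \<psi>_def by simp
  have ipsi: "integrable M \<psi>" if "borel_prob M" for M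
    using bp_integrable[OF that hm hb] unfolding \<psi>_def by simp
  have cen: "(\<integral>x. (\<psi> x - integral\<^sup>L \<alpha> \<psi>) \<partial>M) = integral\<^sup>L M \<psi> - integral\<^sup>L \<alpha> \<psi>"
    if "borel_prob M" for M using bp_centered[OF that ipsi[OF that]] .
  have mem: "\<psi> \<in> Phi1 \<Phi>" unfolding Phi1_def
  proof (intro CollectI exI conjI)
    show "\<psi> = (\<lambda>x. (f1 x + c * g x) / supnorm (\<lambda>y. f1 y + c * g y))"
      unfolding \<psi>_def s_def h_def ..
  qed (use f1 g hnz c_def h_def in auto)
  have e1: "(\<integral>x. (\<psi> x - integral\<^sup>L \<alpha> \<psi>) \<partial>\<mu>) = A h / s"
    using cen[OF assms(5)] intpsi unfolding A_def by (simp add: diff_divide_distrib)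
  have e2: "(\<integral>x. (\<psi> x - integral\<^sup>L \<alpha> \<psi>) \<partial>\<nu>) = B h / s"
    using cen[OF assms(6)] intpsi unfolding B_def by (simp add: diff_divide_distrib)
  have "A h / s \<noteq> B h / s"
  proof
    assume "A h / s = B h / s"
    then have "A h = B h" using spos by (simp add: divide_cancel_right)
    then show False using DAB[of h] Dh n(3) c_def by simp
  qed
  then show ?thesis using mem e1 e2 spos n Ah Bh c_def by (intro bexI[of _ \<psi>]) auto
qed

end
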